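(* Let $\mathfrak{P}=(V,E,L_{\mathcal{A}},L_{\mathcal{C}})$ be a well-formed proof tree with a leaf $v$ such that $L_{\mathcal{A}}(v)$ is not solved, and let $\mathrm{Proc}$ be a sound processor with $\mathrm{Proc}(L_{\mathcal{A}}(v))=(c,\{\langle\mathcal{P}_1,\mathcal{S}_1\rangle,\dots,\langle\mathcal{P}_n,\mathcal{S}_n\rangle\})$. Let $\mathfrak{P}'$ result from $\mathfrak{P}$ by adding fresh nodes $w_1,\dots,w_n$ and edges $(v,w_1),\dots,(v,w_n)$, with labeling extended by $L_{\mathcal{A}}(w_i)=\langle\mathcal{P}_i,\mathcal{S}_i\rangle$ for all $1\le i\le n$ and with $L_{\mathcal{C}}(v)=c$ (and each new leaf $w_i$ labeled $\mathrm{Pol}_0$ if $\mathcal{S}_i=\emptyset$ and $\omega$ otherwise). Then $\mathfrak{P}'$ is also well formed.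
   Context: Annotated dependency pairs (ADPs): over a finite signature $\Sigma$ with defined symbols $\mathcal{D}$ and fresh annotated copies $f^\sharp$ ($f\in\mathcal{D}$), an ADP is $\ell\to\{p_1:r_1,\dots,p_k:r_k\}^m$ with $\ell$ a non-variable unannotated term, $r_j$ possibly annotated terms with $\mathcal{V}(r_j)\subseteq\mathcal{V}(\ell)$, $0<p_j\le1$, $\sum p_j=1$, and flag $m\in\{\mathsf{true},\mathsf{false}\}$. Defined symbols of a set $\mathcal{P}$ of ADPs are roots of left-hand sides; basic terms are $f(t_1,\dots,t_k)$ with $f$ defined and $t_i$ built from the other symbols and variables; $|t|$ is term size; $t^\sharp$ annotates the root. Rewriting with $\mathcal{P}$ (innermost): $s$ rewrites to $\{p_j:t_j\}$ using an ADP $\ell\to\{p_j:r_j\}^m$, a position $\pi$ with a defined or annotated symbol, and $\sigma$ with $\flat(s|_\pi)=\ell\sigma$ ($\flat$ removes annotations) whose proper subterms are normal forms; $t_j=s[r_j\sigma]_\pi$ (at: $m=\mathsf{true}$, $\pi$ annotated), $s[\flat(r_j)\sigma]_\pi$ (nt: $m=\mathsf{true}$, not annotated), $\flat^\uparrow_\pi(s[r_j\sigma]_\pi)$ (af), $\flat^\uparrow_\pi(s[\flat(r_j)\sigma]_\pi)$ (nf), with $\flat^\uparrow_\pi$ removing annotations strictly above $\pi$. $\mathcal{P}$-chain trees are possibly infinite finitely-branching trees with nodes $(p_v:t_v)$, root probability 1, $t_v$ rewriting to $\{\tfrac{p_w}{p_v}:t_w\}_{w\text{ child}}$ at inner nodes.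 For $\mathcal{S}\subseteq\mathcal{P}$, $\operatorname{edl}_{\langle\mathcal{P},\mathcal{S}\rangle}(\mathfrak{T})$ sums $p_v$ over inner nodes rewritten by (at)/(af)-steps with ADPs from $\mathcal{S}$; $\operatorname{edh}_{\langle\mathcal{P},\mathcal{S}\rangle}(t)$ is the supremum over chain trees with root $t^\sharp$; $\operatorname{eirc}_{\langle\mathcal{P},\mathcal{S}\rangle}(n)=\sup\{\operatorname{edh}_{\langle\mathcal{P},\mathcal{S}\rangle}(t)\mid t\text{ basic},|t|\le n\}$; $\iota_{\langle\mathcal{P},\mathcal{S}\rangle}=\iota(\operatorname{eirc}_{\langle\mathcal{P},\mathcal{S}\rangle})$. Complexities $\mathfrak{C}=\{\mathrm{Pol}_0,\mathrm{Pol}_1,\dots,\mathrm{Exp},\mathrm{2\text{-}Exp},\mathrm{Fin},\omega\}$ ordered $\mathrm{Pol}_0\sqsubset\mathrm{Pol}_1\sqsubset\dots\sqsubset\mathrm{Exp}\sqsubset\mathrm{2\text{-}Exp}\sqsubset\mathrm{Fin}\sqsubset\omega$, $\oplus$ = maximum; $\iota(f)=\mathrm{Pol}_a$ for least $a$ with $f\in O(n^a)$, else $\mathrm{Exp}$ if $f\in O(2^{\mathrm{pol}(n)})$, else $\mathrm{2\text{-}Exp}$ if $f\in O(2^{2^{\mathrm{pol}(n)}})$, else $\mathrm{Fin}$ if $f$ never equals $\omega$, else $\omega$. ADP problem: $\langle\mathcal{P},\mathcal{S}\rangle$, $\mathcal{P}$ finite set of ADPs, $\mathcal{S}\subseteq\mathcal{P}$;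 solved if $\mathcal{S}=\emptyset$. A processor maps an ADP problem to $(c,\{\langle\mathcal{P}_1,\mathcal{S}_1\rangle,\dots,\langle\mathcal{P}_n,\mathcal{S}_n\rangle\})$ with $c\in\mathfrak{C}$. A proof tree is a finite tree $(V,E,L_{\mathcal{A}},L_{\mathcal{C}})$, $L_{\mathcal{A}}$ labeling nodes by ADP problems, $L_{\mathcal{C}}$ by complexities, such that for each inner node $v$ with children $w_1,\dots,w_n$ some processor maps $L_{\mathcal{A}}(v)$ to $(L_{\mathcal{C}}(v),\{L_{\mathcal{A}}(w_i)\}_i)$, and each leaf has $L_{\mathcal{C}}=\mathrm{Pol}_0$ if its problem is solved and $\omega$ otherwise. It is well formed if for each node $v$ with $L_{\mathcal{A}}(v)=\langle\mathcal{P},\mathcal{S}\rangle$ and root path $v_1,\dots,v_k=v$: $\iota_{\langle\mathcal{P},\mathcal{S}\rangle}\sqsubseteq L_{\mathcal{C}}(v_1)\oplus\dots\oplus L_{\mathcal{C}}(v_{k-1})\oplus\max\{L'_{\mathcal{C}}(w)\mid w$ reachable from $v$, including $v\}$ and $\iota_{\langle\mathcal{P},\mathcal{P}\setminus\mathcal{S}\rangle}\sqsubseteq L_{\mathcal{C}}(v_1)\oplus\dots\oplus L_{\mathcal{C}}(v_{k-1})$, where $L'_{\mathcal{C}}(w)=L_{\mathcal{C}}(w)$ for inner nodes and $\iota_{L_{\mathcal{A}}(w)}$ for leaves (empty $\oplus$ is $\mathrm{Pol}_0$). A processor $\mathrm{Proc}$ with $\mathrm{Proc}(\langle\mathcal{P},\mathcal{S}\rangle)=(c,\{\langle\mathcal{P}_1,\mathcal{S}_1\rangle,\dots,\langle\mathcal{P}_n,\mathcal{S}_n\rangle\})$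 is sound if for every well-formed proof tree and every node $v$ with $L_{\mathcal{A}}(v)=\langle\mathcal{P},\mathcal{S}\rangle$ and root path $v_1,\dots,v_k=v$: (1) $\iota_{\langle\mathcal{P},\mathcal{S}\rangle}\sqsubseteq L_{\mathcal{C}}(v_1)\oplus\dots\oplus L_{\mathcal{C}}(v_{k-1})\oplus c\oplus\iota_{\langle\mathcal{P}_1,\mathcal{S}_1\rangle}\oplus\dots\oplus\iota_{\langle\mathcal{P}_n,\mathcal{S}_n\rangle}$ and (2) $\iota_{\langle\mathcal{P}_i,\mathcal{P}_i\setminus\mathcal{S}_i\rangle}\sqsubseteq L_{\mathcal{C}}(v_1)\oplus\dots\oplus L_{\mathcal{C}}(v_{k-1})\oplus c$ for all $1\le i\le n$. *)

theory Defs
  imports "HOL-Analysis.Analysis" "HOL-Computational_Algebra.Polynomial"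
begin

section \<open>Terms with annotations\<close>

text \<open>The boolean flag of Fun
  is true iff the symbol is annotated (f sharp).\<close>

datatype 'f aterm = Var nat | Fun 'f bool "'f aterm list"

fun unann :: "'f aterm \<Rightarrow> 'f aterm" where
  "unann (Var x) = Var x"
| "unann (Fun f b ts) = Fun f False (map unann ts)"

fun sharp :: "'f aterm \<Rightarrow> 'f aterm" where
  "sharp (Var x) = Var x"
| "sharp (Fun f b ts) = Fun f True ts"

fun is_ann :: "'f aterm \<Rightarrow> bool" where
  "is_ann (Var x) = False"
| "is_ann (Fun f b ts) = b"

fun root :: "'f aterm \<Rightarrow> 'f option" where
  "root (Var x) = None"
| "root (Fun f b ts) = Some f"

fun subst :: "(nat \<Rightarrow> 'f aterm) \<Rightarrow> 'f aterm \<Rightarrow> 'f aterm" where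
  "subst \<sigma> (Var x) = \<sigma> x"
| "subst \<sigma> (Fun f b ts) = Fun f b (map (subst \<sigma>) ts)"

fun vars :: "'f aterm \<Rightarrow> nat set" where
  "vars (Var x) = {x}"
| "vars (Fun f b ts) = (\<Union>t\<in>set ts. vars t)"

fun tsize :: "'f aterm \<Rightarrow> nat" where
  "tsize (Var x) = 1"
| "tsize (Fun f b ts) = 1 + sum_list (map tsize ts)"

function poss :: "'f aterm \<Rightarrow> nat list set" where
  "poss (Var x) = {[]}"
| "poss (Fun f b ts) = insert [] (\<Union>i\<in>{..<length ts}. (\<lambda>p. i # p) ` poss (ts ! i))"
  by pat_completeness auto
termination
  by (relation "Wellfounded.measure size") (auto simp: less_Suc_eq_le intro!: size_list_estimation' nth_mem)

fun subt_at :: "'f aterm \<Rightarrow> nat list \<Rightarrow> 'f aterm" where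
  "subt_at t [] = t"
| "subt_at (Fun f b ts) (i # p) = subt_at (ts ! i) p"
| "subt_at (Var x) (i # p) = Var x"

fun replace_at :: "'f aterm \<Rightarrow> nat list \<Rightarrow> 'f aterm \<Rightarrow> 'f aterm" where
  "replace_at t [] s = s"
| "replace_at (Fun f b ts) (i # p) s = Fun f b (ts[i := replace_at (ts ! i) p s])"
| "replace_at (Var x) (i # p) s = Var x"

fun unann_above :: "'f aterm \<Rightarrow> nat list \<Rightarrow> 'f aterm" where
  "unann_above t [] = t"
| "unann_above (Fun f b ts) (i # p) = Fun f False (ts[i := unann_above (ts ! i) p])"
| "unann_above (Var x) (i # p) = Var x"

fun wf_term :: "('f \<Rightarrow> nat) \<Rightarrow> 'f set \<Rightarrow> 'f aterm \<Rightarrow> bool" where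
  "wf_term ar D (Var x) = True"
| "wf_term ar D (Fun f b ts) = (length ts = ar f \<and> (b \<longrightarrow> f \<in> D) \<and> (\<forall>t\<in>set ts. wf_term ar D t))"

section \<open>Annotated dependency pairs\<close>

datatype 'f adp = ADP (lhs: "'f aterm") (rhss: "(real \<times> 'f aterm) list") (flag: bool)

definition valid_adp :: "('f \<Rightarrow> nat) \<Rightarrow> 'f set \<Rightarrow> 'f adp \<Rightarrow> bool" where
  "valid_adp ar D a \<longleftrightarrow>
     wf_term ar D (lhs a) \<and> unann (lhs a) = lhs a \<and> (\<forall>x. lhs a \<noteq> Var x) \<and>
     rhss a \<noteq> [] \<and>
     (\<forall>(p, r)\<in>set (rhss a). 0 < p \<and> p \<le> 1 \<and> wf_term ar D r \<and> vars r \<subseteq> vars (lhs a)) \<and>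
     sum_list (map fst (rhss a)) = 1"

type_synonym 'f problem = "'f adp set \<times> 'f adp set"

definition valid_problem :: "('f \<Rightarrow> nat) \<Rightarrow> 'f set \<Rightarrow> 'f problem \<Rightarrow> bool" where
  "valid_problem ar D X \<longleftrightarrow> finite (fst X) \<and> snd X \<subseteq> fst X \<and> (\<forall>a\<in>fst X. valid_adp ar D a)"

definition solved :: "'f problem \<Rightarrow> bool" where
  "solved X \<longleftrightarrow> snd X = {}"

definition defs :: "'f adp set \<Rightarrow> 'f set" where
  "defs P = {f. \<exists>a\<in>P. root (lhs a) = Some f}"

definition NF :: "'f adp set \<Rightarrow> 'f aterm \<Rightarrow> bool" where
  "NF P t \<longleftrightarrow> (\<forall>q\<in>poss t. \<forall>a\<in>P. \<forall>\<sigma>. unann (subt_at t q) \<noteq> subst \<sigma> (lhs a))"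

text \<open>Innermost rewrite step of s with ADP a (from P) to the multi-distribution mu;
  ann records whether the rewritten position is annotated, i.e. whether the step is an
  (at)/(af)-step (ann = True) or an (nt)/(nf)-step (ann = False).\<close>
definition rstep :: "'f adp set \<Rightarrow> 'f aterm \<Rightarrow> 'f adp \<Rightarrow> bool \<Rightarrow> (real \<times> 'f aterm) list \<Rightarrow> bool" where
  "rstep P s a ann \<mu> \<longleftrightarrow> a \<in> P \<and>
     (\<exists>\<pi> \<sigma>. \<pi> \<in> poss s \<and>
        ((\<exists>f. root (subt_at s \<pi>) = Some f \<and> f \<in> defs P) \<or> is_ann (subt_at s \<pi>)) \<and>
        unann (subt_at s \<pi>) = subst \<sigma> (lhs a) \<and>
        (\<forall>q\<in>poss (subt_at s \<pi>). q \<noteq> [] \<longrightarrow> NF P (subt_at (subt_at s \<pi>) q)) \<and>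
        ann = is_ann (subt_at s \<pi>) \<and>
        \<mu> = map (\<lambda>(p, r).
               (p, (let s' = replace_at s \<pi> (subst \<sigma> (if ann then r else unann r))
                    in if flag a then s' else unann_above s' \<pi>))) (rhss a))"

section \<open>Chain trees\<close>

text \<open>A chain tree: node set N of positions (lists of naturals) with k v children
  v@[0],...,v@[k v - 1]; labels pr (probability) and tm (term); ru and an record the
  ADP used at inner nodes and whether the step was an (at)/(af)-step.\<close>
definition chain_tree ::
  "'f adp set \<Rightarrow> nat list set \<Rightarrow> (nat list \<Rightarrow> real) \<Rightarrow> (nat list \<Rightarrow> 'f aterm)
     \<Rightarrow> (nat list \<Rightarrow> 'f adp) \<Rightarrow> (nat list \<Rightarrow> bool) \<Rightarrow> (nat list \<Rightarrow> nat) \<Rightarrow> bool" where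
  "chain_tree P N pr tm ru an k \<longleftrightarrow>
     [] \<in> N \<and> (\<forall>v i. v @ [i] \<in> N \<longleftrightarrow> v \<in> N \<and> i < k v) \<and> pr [] = 1 \<and>
     (\<forall>v\<in>N. 0 < k v \<longrightarrow>
        rstep P (tm v) (ru v) (an v) (map (\<lambda>i. (pr (v @ [i]) / pr v, tm (v @ [i]))) [0..<k v]))"

definition edl ::
  "'f adp set \<Rightarrow> nat list set \<Rightarrow> (nat list \<Rightarrow> real)
     \<Rightarrow> (nat list \<Rightarrow> 'f adp) \<Rightarrow> (nat list \<Rightarrow> bool) \<Rightarrow> (nat list \<Rightarrow> nat) \<Rightarrow> ennreal" where
  "edl S N pr ru an k =
     (\<integral>\<^sup>+ v. (if v \<in> N \<and> 0 < k v \<and> ru v \<in> S \<and> an v then ennreal (pr v) else 0) \<partial>count_space UNIV)"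

definition edh :: "'f adp set \<Rightarrow> 'f adp set \<Rightarrow> 'f aterm \<Rightarrow> ennreal" where
  "edh P S t = Sup {edl S N pr ru an k | N pr tm ru an k.
                      chain_tree P N pr tm ru an k \<and> tm [] = sharp t}"

fun ctor_term :: "'f set \<Rightarrow> 'f aterm \<Rightarrow> bool" where
  "ctor_term F (Var x) = True"
| "ctor_term F (Fun f b ts) = (\<not> b \<and> f \<notin> F \<and> (\<forall>t\<in>set ts. ctor_term F t))"

definition basic :: "('f \<Rightarrow> nat) \<Rightarrow> 'f set \<Rightarrow> 'f adp set \<Rightarrow> 'f aterm \<Rightarrow> bool" where
  "basic ar D P t \<longleftrightarrow> wf_term ar D t \<and>
     (\<exists>f ts. t = Fun f False ts \<and> f \<in> defs P \<and> (\<forall>u\<in>set ts. ctor_term (defs P) u))"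

definition eirc :: "('f \<Rightarrow> nat) \<Rightarrow> 'f set \<Rightarrow> 'f adp set \<Rightarrow> 'f adp set \<Rightarrow> nat \<Rightarrow> ennreal" where
  "eirc ar D P S n = Sup {edh P S t | t. basic ar D P t \<and> tsize t \<le> n}"

section \<open>Complexities\<close>

datatype cplx = Pol nat | Exp | TwoExp | Fin | Omega

fun ckey :: "cplx \<Rightarrow> nat \<times> nat" where
  "ckey (Pol a) = (0, a)"
| "ckey Exp = (1, 0)"
| "ckey TwoExp = (2, 0)"
| "ckey Fin = (3, 0)"
| "ckey Omega = (4, 0)"

lemma inj_ckey: "inj ckey"
proof
  fix x y assume "ckey x = ckey y" then show "x = y"
    by (cases x; cases y) auto
qed

instantiation cplx :: linorder
begin
definition less_eq_cplx :: "cplx \<Rightarrow> cplx \<Rightarrow> bool" where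
  "less_eq_cplx x y \<longleftrightarrow>
     fst (ckey x) < fst (ckey y) \<or> (fst (ckey x) = fst (ckey y) \<and> snd (ckey x) \<le> snd (ckey y))"
definition less_cplx :: "cplx \<Rightarrow> cplx \<Rightarrow> bool" where
  "less_cplx x y \<longleftrightarrow>
     fst (ckey x) < fst (ckey y) \<or> (fst (ckey x) = fst (ckey y) \<and> snd (ckey x) < snd (ckey y))"
instance
proof
  fix x y z :: cplx
  show "x < y \<longleftrightarrow> x \<le> y \<and> \<not> y \<le> x" by (auto simp: less_eq_cplx_def less_cplx_def)
  show "x \<le> x" by (auto simp: less_eq_cplx_def)
  show "x \<le> y \<Longrightarrow> y \<le> z \<Longrightarrow> x \<le> z" by (auto simp: less_eq_cplx_def)
  show "x \<le> y \<or> y \<le> x" by (auto simp: less_eq_cplx_def)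
  show "x \<le> y \<Longrightarrow> y \<le> x \<Longrightarrow> x = y"
  proof -
    assume "x \<le> y" "y \<le> x"
    then have "ckey x = ckey y" by (auto simp: less_eq_cplx_def prod_eq_iff)
    then show "x = y" using inj_ckey by (auto dest: injD)
  qed
qed
end

text \<open>big maximum (oplus) over a finite set of complexities; empty maximum is Pol 0\<close>
definition cMax :: "cplx set \<Rightarrow> cplx" where
  "cMax A = Max (insert (Pol 0) A)"

definition poly_bounded :: "(nat \<Rightarrow> ennreal) \<Rightarrow> nat \<Rightarrow> bool" where
  "poly_bounded f a \<longleftrightarrow> (\<exists>c N. \<forall>n\<ge>N. f n \<le> ennreal (c * real n ^ a))"

definition exp_bounded :: "(nat \<Rightarrow> ennreal) \<Rightarrow> bool" where
  "exp_bounded f \<longleftrightarrow> (\<exists>(p :: real poly) c N. \<forall>n\<ge>N. f n \<le> ennreal (c * 2 powr poly p (real n)))"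

definition dexp_bounded :: "(nat \<Rightarrow> ennreal) \<Rightarrow> bool" where
  "dexp_bounded f \<longleftrightarrow>
     (\<exists>(p :: real poly) c N. \<forall>n\<ge>N. f n \<le> ennreal (c * 2 powr (2 powr poly p (real n))))"

definition iota_fun :: "(nat \<Rightarrow> ennreal) \<Rightarrow> cplx" where
  "iota_fun f =
     (if \<exists>a. poly_bounded f a then Pol (LEAST a. poly_bounded f a)
      else if exp_bounded f then Exp
      else if dexp_bounded f then TwoExp
      else if \<forall>n. f n \<noteq> \<infinity> then Fin
      else Omega)"

definition iota :: "('f \<Rightarrow> nat) \<Rightarrow> 'f set \<Rightarrow> 'f problem \<Rightarrow> cplx" where
  "iota ar D X = iota_fun (eirc ar D (fst X) (snd X))"

section \<open>Processors and proof trees\<close>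

type_synonym 'f processor = "'f problem \<Rightarrow> cplx \<times> 'f problem set"

definition is_processor :: "('f \<Rightarrow> nat) \<Rightarrow> 'f set \<Rightarrow> 'f processor \<Rightarrow> bool" where
  "is_processor ar D proc \<longleftrightarrow>
     (\<forall>X. valid_problem ar D X \<longrightarrow>
        finite (snd (proc X)) \<and> (\<forall>Y\<in>snd (proc X). valid_problem ar D Y))"

definition children :: "(nat \<times> nat) set \<Rightarrow> nat \<Rightarrow> nat set" where
  "children E v = {w. (v, w) \<in> E}"

definition ancs :: "(nat \<times> nat) set \<Rightarrow> nat \<Rightarrow> nat set" where
  "ancs E v = {u. (u, v) \<in> E\<^sup>+}"

definition reach :: "(nat \<times> nat) set \<Rightarrow> nat \<Rightarrow> nat set" where
  "reach E v = {w. (v, w) \<in> E\<^sup>*}"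

definition proof_tree ::
  "('f \<Rightarrow> nat) \<Rightarrow> 'f set \<Rightarrow> nat set \<Rightarrow> (nat \<times> nat) set \<Rightarrow> nat
     \<Rightarrow> (nat \<Rightarrow> 'f problem) \<Rightarrow> (nat \<Rightarrow> cplx) \<Rightarrow> bool" where
  "proof_tree ar D V E r LA LC \<longleftrightarrow>
     finite V \<and> r \<in> V \<and> E \<subseteq> V \<times> V \<and>
     (\<forall>v\<in>V. (r, v) \<in> E\<^sup>*) \<and> (\<forall>u. (u, r) \<notin> E) \<and> (\<forall>v\<in>V - {r}. \<exists>!u. (u, v) \<in> E) \<and>
     (\<forall>v\<in>V. valid_problem ar D (LA v)) \<and>
     (\<forall>v\<in>V. children E v \<noteq> {} \<longrightarrow>
        (\<exists>proc. is_processor ar D proc \<and> proc (LA v) = (LC v, LA ` children E v))) \<and>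
     (\<forall>v\<in>V. children E v = {} \<longrightarrow> LC v = (if solved (LA v) then Pol 0 else Omega))"

definition well_formed ::
  "('f \<Rightarrow> nat) \<Rightarrow> 'f set \<Rightarrow> nat set \<Rightarrow> (nat \<times> nat) set \<Rightarrow> nat
     \<Rightarrow> (nat \<Rightarrow> 'f problem) \<Rightarrow> (nat \<Rightarrow> cplx) \<Rightarrow> bool" where
  "well_formed ar D V E r LA LC \<longleftrightarrow> proof_tree ar D V E r LA LC \<and>
     (\<forall>v\<in>V.
        iota ar D (LA v) \<le>
          max (cMax (LC ` ancs E v))
              (cMax ((\<lambda>w. if children E w \<noteq> {} then LC w else iota ar D (LA w)) ` reach E v)) \<and>
        iota ar D (fst (LA v), fst (LA v) - snd (LA v)) \<le> cMax (LC ` ancs E v))"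

definition sound_proc :: "('f \<Rightarrow> nat) \<Rightarrow> 'f set \<Rightarrow> 'f processor \<Rightarrow> bool" where
  "sound_proc ar D proc \<longleftrightarrow>
     (\<forall>V E r LA LC. well_formed ar D V E r LA LC \<longrightarrow>
        (\<forall>v\<in>V.
           iota ar D (LA v) \<le>
             max (cMax (LC ` ancs E v))
                 (max (fst (proc (LA v))) (cMax (iota ar D ` snd (proc (LA v))))) \<and>
           (\<forall>Y\<in>snd (proc (LA v)).
              iota ar D (fst Y, fst Y - snd Y) \<le> max (cMax (LC ` ancs E v)) (fst (proc (LA v))))))"

end

theory Submission
  imports Defs
begin

lemma Pol0_le: "Pol 0 \<le> (x::cplx)" by (cases x) (auto simp: less_eq_cplx_def)

lemma le_cMaxI: "finite A \<Longrightarrow> a \<in> A \<Longrightarrow> y \<le> a \<Longrightarrow> y \<le> cMax A"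
  unfolding cMax_def by (meson Max_ge finite_insert insertI2 order_trans)

lemma cMax_leI: "finite A \<Longrightarrow> (\<And>a. a \<in> A \<Longrightarrow> a \<le> y) \<Longrightarrow> cMax A \<le> y"
  unfolding cMax_def using Pol0_le by (simp add: Max_le_iff)

lemma tree_anc:
  assumes E: "E \<subseteq> V \<times> V" and up: "\<forall>v\<in>V - {r}. \<exists>!u. (u,v)\<in>E" and nr: "\<forall>u. (u,r) \<notin> E"
  and xv: "(x,z) \<in> E\<^sup>*"
  shows "(u,z) \<in> E\<^sup>+ \<Longrightarrow> (u,x) \<in> E\<^sup>+ \<or> (x,u) \<in> E\<^sup>*"
  using xv
proof (induction z rule: rtrancl_induct)
  case base then show ?case by simp
next
  case (step y z)
  from step.prems obtain y' where 1: "(u,y')\<in>E\<^sup>*" "(y',z)\<in>E" by (meson tranclD2)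
  have "z \<in> V" "z \<noteq> r" using step.hyps(2) E nr by auto
  then have "y' = y" using up 1(2) step.hyps(2) by blast
  then show ?case using 1(1) step by (metis rtrancl_eq_or_trancl)
qed

theorem mainTheorem3:
  fixes ar :: "'f::finite \<Rightarrow> nat" and D :: "'f set"
    and V :: "nat set" and E :: "(nat \<times> nat) set" and r :: nat
    and LA :: "nat \<Rightarrow> 'f problem" and LC :: "nat \<Rightarrow> cplx"
    and v :: nat and proc :: "'f processor" and c :: cplx and Q :: "'f problem set"
    and w :: "'f problem \<Rightarrow> nat"
  assumes "well_formed ar D V E r LA LC"
    and "v \<in> V" and "children E v = {}" and "\<not> solved (LA v)"
    and "is_processor ar D proc" and "sound_proc ar D proc"
    and "proc (LA v) = (c, Q)"
    and "Q \<noteq> {} \<or> c = Omega"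
    and "inj_on w Q" and "w ` Q \<inter> V = {}"
  shows "well_formed ar D (V \<union> w ` Q) (E \<union> (\<lambda>q. (v, w q)) ` Q) r
           (\<lambda>x. if x \<in> w ` Q then inv_into Q w x else LA x)
           (\<lambda>x. if x = v then c
                else if x \<in> w ` Q then (if solved (inv_into Q w x) then Pol 0 else Omega)
                else LC x)"
proof (cases "Q = {}")
  case True
  have pt: "proof_tree ar D V E r LA LC" using assms(1) unfolding well_formed_def by blast
  then have "LC v = Omega" using assms(2,3,4) unfolding proof_tree_def by auto
  then have "c = LC v" using True assms(8) by simp
  then have "(\<lambda>x. if x = v then c
                else if x \<in> w ` Q then (if solved (inv_into Q w x) then Pol 0 else Omega)
                else LC x) = LC" using True by auto
  moreover have "(\<lambda>x. if x \<in> w ` Q then inv_into Q w x else LA x) = LA" using True by auto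
  ultimately show ?thesis using True assms(1) by simp
next
  case False
  have pt: "proof_tree ar D V E r LA LC" using assms(1) unfolding well_formed_def by blast
  have finV: "finite V" and rV: "r \<in> V" and EV: "E \<subseteq> V \<times> V"
    and reachr: "\<forall>y\<in>V. (r, y) \<in> E\<^sup>*" and noroot: "\<forall>u. (u, r) \<notin> E"
    and upar: "\<forall>y\<in>V - {r}. \<exists>!u. (u, y) \<in> E"
    and valid: "\<forall>y\<in>V. valid_problem ar D (LA y)"
    and procs: "\<forall>y\<in>V. children E y \<noteq> {} \<longrightarrow>
        (\<exists>proc. is_processor ar D proc \<and> proc (LA y) = (LC y, LA ` children E y))"
    and leaves: "\<forall>y\<in>V. children E y = {} \<longrightarrow> LC y = (if solved (LA y) then Pol 0 else Omega)"
    using pt unfolding proof_tree_def by blast+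
  define G where "G = (\<lambda>u. if children E u \<noteq> {} then LC u else iota ar D (LA u))"
  have wfc: "\<forall>x\<in>V. iota ar D (LA x) \<le> max (cMax (LC ` ancs E x)) (cMax (G ` reach E x)) \<and>
        iota ar D (fst (LA x), fst (LA x) - snd (LA x)) \<le> cMax (LC ` ancs E x)"
    using assms(1) unfolding well_formed_def G_def by blast
  have vV: "v \<in> V" by fact
  have finQ: "finite Q" and validQ: "\<forall>Y\<in>Q. valid_problem ar D Y"
    using assms(5,7) valid vV unfolding is_processor_def by (metis snd_conv)+
  have noEv: "\<And>y. (v, y) \<notin> E" using assms(3) unfolding children_def by auto
  have Gv: "G v = iota ar D (LA v)" using assms(3) unfolding G_def by simp
  have S1: "iota ar D (LA v) \<le> max (cMax (LC ` ancs E v)) (max c (cMax (iota ar D ` Q)))"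
   and S2: "\<forall>Y\<in>Q. iota ar D (fst Y, fst Y - snd Y) \<le> max (cMax (LC ` ancs E v)) c"
    using assms(6,1,7) vV unfolding sound_proc_def by (metis fst_conv snd_conv)+
  define W where "W = w ` Q"
  define F where "F = (\<lambda>q. (v, w q)) ` Q"
  define E' where "E' = E \<union> F"
  define LA' where "LA' = (\<lambda>x. if x \<in> W then inv_into Q w x else LA x)"
  define LC' where "LC' = (\<lambda>x. if x = v then c
                else if x \<in> W then (if solved (inv_into Q w x) then Pol 0 else Omega)
                else LC x)"
  define G' where "G' = (\<lambda>u. if children E' u \<noteq> {} then LC' u else iota ar D (LA' u))"
  have WV: "W \<inter> V = {}" using assms(10) W_def by simp
  have vW: "v \<notin> W" using WV vV by auto
  have finW: "finite W" using finQ W_def by simp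
  have E'V: "\<And>a b. (a,b) \<in> E' \<Longrightarrow> b \<in> V \<Longrightarrow> (a,b) \<in> E"
    using WV unfolding E'_def F_def W_def by auto
  have E'W: "\<And>a b. (a,b) \<in> E' \<Longrightarrow> b \<in> W \<Longrightarrow> a = v"
    using WV EV unfolding E'_def F_def W_def by auto
  have E'fromW: "\<And>a b. (a,b) \<in> E' \<Longrightarrow> a \<in> W \<Longrightarrow> False"
    using WV EV vW unfolding E'_def F_def W_def by auto
  have E'sub: "E' \<subseteq> (V \<union> W) \<times> (V \<union> W)"
    using EV vV unfolding E'_def F_def W_def by auto
  have vwq: "\<And>q. q \<in> Q \<Longrightarrow> (v, w q) \<in> E'" unfolding E'_def F_def by auto
  have EE': "E \<subseteq> E'" unfolding E'_def by auto
  have rtrV: "\<And>a b. (a,b) \<in> E'\<^sup>* \<Longrightarrow> b \<in> V \<Longrightarrow> (a,b) \<in> E\<^sup>*"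
  proof -
    fix a b assume "(a,b) \<in> E'\<^sup>*" "b \<in> V"
    then show "(a,b) \<in> E\<^sup>*"
    proof (induction b rule: rtrancl_induct)
      case base then show ?case by simp
    next
      case (step y z)
      then have "(y,z) \<in> E" using E'V by blast
      then have "y \<in> V" using EV by auto
      then show ?case using step by (meson \<open>(y, z) \<in> E\<close> rtrancl.rtrancl_into_rtrancl)
    qed
  qed
  have trV: "\<And>a b. (a,b) \<in> E'\<^sup>+ \<Longrightarrow> b \<in> V \<Longrightarrow> (a,b) \<in> E\<^sup>+"
  proof -
    fix a b assume "(a,b) \<in> E'\<^sup>+" "b \<in> V"
    then obtain y where "(a,y) \<in> E'\<^sup>*" "(y,b) \<in> E'" by (meson tranclD2)
    then have "(y,b) \<in> E" using E'V \<open>b \<in> V\<close> by blast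
    then have "y \<in> V" using EV by auto
    then show "(a,b) \<in> E\<^sup>+" using rtrV \<open>(a,y) \<in> E'\<^sup>*\<close> \<open>(y,b) \<in> E\<close>
      by (meson rtrancl_into_trancl1)
  qed
  have ancsV: "\<And>x. x \<in> V \<Longrightarrow> ancs E' x = ancs E x"
    unfolding ancs_def using trV trancl_mono[OF _ EE'] by blast
  have ancs_sub: "\<And>x. ancs E x \<subseteq> V" unfolding ancs_def using EV
    by (auto dest: tranclD)
  have v_ancs: "\<And>x. v \<notin> ancs E x" unfolding ancs_def using noEv by (auto dest: tranclD)
  have ancsW: "\<And>q. q \<in> Q \<Longrightarrow> ancs E' (w q) = insert v (ancs E v)"
  proof -
    fix q assume q: "q \<in> Q"
    show "ancs E' (w q) = insert v (ancs E v)"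
    proof
      show "ancs E' (w q) \<subseteq> insert v (ancs E v)"
      proof
        fix u assume "u \<in> ancs E' (w q)"
        then obtain y where "(u,y) \<in> E'\<^sup>*" "(y, w q) \<in> E'" unfolding ancs_def by (auto dest: tranclD2)
        then have "y = v" using E'W q W_def by blast
        then have "(u,v) \<in> E\<^sup>*" using rtrV vV \<open>(u,y) \<in> E'\<^sup>*\<close> by blast
        then show "u \<in> insert v (ancs E v)" unfolding ancs_def
          by (auto simp: rtrancl_eq_or_trancl)
      qed
    next
      show "insert v (ancs E v) \<subseteq> ancs E' (w q)"
        unfolding ancs_def using vwq[OF q] trancl_mono[OF _ EE']
        by (auto intro: trancl_into_trancl)
    qed
  qed
  have reachW: "\<And>q. q \<in> Q \<Longrightarrow> reach E' (w q) = {w q}"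
  proof -
    fix q assume q: "q \<in> Q"
    have "\<And>y. (w q, y) \<in> E'\<^sup>* \<Longrightarrow> y = w q"
      using E'fromW q W_def by (metis converse_rtranclE imageI)
    then show "reach E' (w q) = {w q}" unfolding reach_def by auto
  qed
  have reach_subV: "\<And>x. x \<in> V \<Longrightarrow> reach E x \<subseteq> V"
    unfolding reach_def using EV by (auto elim: rtranclE)
  have reachV: "\<And>x. x \<in> V \<Longrightarrow> reach E' x = reach E x \<union> (if v \<in> reach E x then W else {})"
  proof -
    fix x assume x: "x \<in> V"
    show "reach E' x = reach E x \<union> (if v \<in> reach E x then W else {})"
    proof
      show "reach E' x \<subseteq> reach E x \<union> (if v \<in> reach E x then W else {})"
      proof
        fix y assume "y \<in> reach E' x"
        then have y: "(x,y) \<in> E'\<^sup>*" unfolding reach_def by simp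
        show "y \<in> reach E x \<union> (if v \<in> reach E x then W else {})"
        proof (cases "y \<in> V")
          case True then show ?thesis using rtrV y unfolding reach_def by auto
        next
          case False
          then have "y \<noteq> x" using x by auto
          then obtain y' where "(x,y') \<in> E'\<^sup>*" "(y',y) \<in> E'" using y by (auto elim: rtranclE)
          moreover have "y \<in> W" using E'sub \<open>(y',y) \<in> E'\<close> False by auto
          ultimately have "y' = v" using E'W by blast
          then have "v \<in> reach E x" using rtrV vV \<open>(x,y') \<in> E'\<^sup>*\<close> unfolding reach_def by blast
          then show ?thesis using \<open>y \<in> W\<close> by simp
        qed
      qed
    next
      show "reach E x \<union> (if v \<in> reach E x then W else {}) \<subseteq> reach E' x"
        unfolding reach_def W_def using rtrancl_mono[OF EE'] vwq
        by (auto intro: rtrancl_into_rtrancl)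
    qed
  qed
  have childrenV: "\<And>x. x \<noteq> v \<Longrightarrow> children E' x = children E x"
    unfolding children_def E'_def F_def by auto
  have childrenv: "children E' v = W"
    unfolding children_def E'_def F_def W_def using noEv by auto
  have childrenW: "\<And>x. x \<in> W \<Longrightarrow> children E' x = {}"
    unfolding children_def using E'fromW by auto
  have LA'V: "\<And>x. x \<in> V \<Longrightarrow> LA' x = LA x" unfolding LA'_def using WV by auto
  have LA'W: "\<And>q. q \<in> Q \<Longrightarrow> LA' (w q) = q" unfolding LA'_def W_def using assms(9) by auto
  have LC'V: "\<And>x. x \<in> V \<Longrightarrow> x \<noteq> v \<Longrightarrow> LC' x = LC x" unfolding LC'_def using WV by auto
  have LC'v: "LC' v = c" unfolding LC'_def by simp
  have WQ: "LA' ` W = Q" unfolding W_def using LA'W by force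
  have pt': "proof_tree ar D (V \<union> W) E' r LA' LC'"
    unfolding proof_tree_def
  proof (intro conjI ballI allI impI)
    show "finite (V \<union> W)" using finV finW by simp
    show "r \<in> V \<union> W" using rV by simp
    show "E' \<subseteq> (V \<union> W) \<times> (V \<union> W)" by (rule E'sub)
  next
    fix y assume "y \<in> V \<union> W"
    then show "(r, y) \<in> E'\<^sup>*"
    proof
      assume "y \<in> V" then show ?thesis using reachr rtrancl_mono[OF EE'] by blast
    next
      assume "y \<in> W"
      then obtain q where "q \<in> Q" "y = w q" unfolding W_def by auto
      then show ?thesis using reachr vV rtrancl_mono[OF EE'] vwq
        by (meson rtrancl_into_rtrancl subsetD)
    qed
  next
    fix u show "(u, r) \<notin> E'" using E'V rV noroot by blast
  next
    fix y assume y: "y \<in> V \<union> W - {r}"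
    show "\<exists>!u. (u, y) \<in> E'"
    proof (cases "y \<in> V")
      case True
      then have "\<And>u. (u,y) \<in> E' \<longleftrightarrow> (u,y) \<in> E" using E'V EE' by blast
      then show ?thesis using upar y True by simp
    next
      case False
      then have "y \<in> W" using y by auto
      then obtain q where "q \<in> Q" "y = w q" unfolding W_def by auto
      then show ?thesis using vwq E'W \<open>y \<in> W\<close> by blast
    qed
  next
    fix y assume y: "y \<in> V \<union> W"
    show "valid_problem ar D (LA' y)"
    proof (cases "y \<in> V")
      case True then show ?thesis using valid LA'V by simp
    next
      case False
      then obtain q where "q \<in> Q" "y = w q" using y unfolding W_def by auto
      then show ?thesis using validQ LA'W by simp
    qed
  next
    fix y assume y: "y \<in> V \<union> W" and ch: "children E' y \<noteq> {}"
    show "\<exists>proc. is_processor ar D proc \<and> proc (LA' y) = (LC' y, LA' ` children E' y)"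
    proof (cases "y = v")
      case True
      then show ?thesis using assms(5,7) LA'V vV LC'v childrenv WQ by auto
    next
      case False
      then have "y \<in> V" using y ch childrenW by auto
      have "children E y \<subseteq> V" unfolding children_def using EV by auto
      then have "LA' ` children E y = LA ` children E y" using LA'V by (intro image_cong) auto
      then show ?thesis using procs \<open>y \<in> V\<close> False ch childrenV LA'V LC'V by auto
    qed
  next
    fix y assume y: "y \<in> V \<union> W" and ch: "children E' y = {}"
    show "LC' y = (if solved (LA' y) then Pol 0 else Omega)"
    proof (cases "y \<in> V")
      case True
      have "y \<noteq> v" using ch childrenv False W_def by auto
      then show ?thesis using leaves True LA'V LC'V ch childrenV by auto
    next
      case False
      then have "y \<in> W" "y \<noteq> v" using y vV by auto
      then show ?thesis unfolding LC'_def LA'_def by simp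
    qed
  qed
  have finA: "\<And>x. finite (ancs E x)" using ancs_sub finV finite_subset by blast
  have finA': "\<And>x. x \<in> V \<union> W \<Longrightarrow> finite (ancs E' x)"
    using ancsV ancsW finA unfolding W_def by auto
  have finR': "\<And>x. x \<in> V \<union> W \<Longrightarrow> finite (reach E' x)"
  proof -
    fix x assume "x \<in> V \<union> W"
    then show "finite (reach E' x)"
    proof
      assume xV: "x \<in> V"
      then have "finite (reach E x)" using reach_subV finV finite_subset by blast
      then show ?thesis using reachV[OF xV] finW by simp
    next
      assume "x \<in> W" then show ?thesis using reachW W_def by auto
    qed
  qed
  have LCeq: "\<And>y u. u \<in> ancs E y \<Longrightarrow> LC' u = LC u" using LC'V ancs_sub v_ancs by blast
  have wfc': "\<forall>x\<in>V \<union> W. iota ar D (LA' x) \<le> max (cMax (LC' ` ancs E' x)) (cMax (G' ` reach E' x)) \<and>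
        iota ar D (fst (LA' x), fst (LA' x) - snd (LA' x)) \<le> cMax (LC' ` ancs E' x)"
  proof
    fix x assume x: "x \<in> V \<union> W"
    show "iota ar D (LA' x) \<le> max (cMax (LC' ` ancs E' x)) (cMax (G' ` reach E' x)) \<and>
        iota ar D (fst (LA' x), fst (LA' x) - snd (LA' x)) \<le> cMax (LC' ` ancs E' x)"
    proof (cases "x \<in> V")
      case True
      have LCA: "LC' ` ancs E' x = LC ` ancs E x"
        using ancsV[OF True] LCeq by (metis image_cong)
      define R where "R = max (cMax (LC' ` ancs E' x)) (cMax (G' ` reach E' x))"
      have GG: "\<And>u. u \<in> V \<Longrightarrow> u \<noteq> v \<Longrightarrow> G' u = G u"
        unfolding G_def G'_def using childrenV LC'V LA'V by auto
      have A: "cMax (LC ` ancs E x) \<le> R" unfolding R_def LCA by (simp add: le_max_iff_disj)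
      have B: "\<And>u. u \<in> reach E' x \<Longrightarrow> G' u \<le> R"
      proof -
        fix u assume "u \<in> reach E' x"
        then have "G' u \<le> cMax (G' ` reach E' x)" using finR'[OF x] by (intro le_cMaxI) auto
        then show "G' u \<le> R" unfolding R_def by (simp add: le_max_iff_disj)
      qed
      have C: "\<And>u. u \<in> ancs E x \<Longrightarrow> LC u \<le> R"
      proof -
        fix u assume "u \<in> ancs E x"
        then have "LC u \<le> cMax (LC ` ancs E x)" using finA by (intro le_cMaxI) auto
        then show "LC u \<le> R" using A by simp
      qed
      have D: "cMax (G ` reach E x) \<le> R"
      proof (rule cMax_leI)
        show "finite (G ` reach E x)" using reach_subV[OF True] finV finite_subset by blast
      next
        fix a assume "a \<in> G ` reach E x"
        then obtain u where u: "u \<in> reach E x" "a = G u" by auto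
        have uV: "u \<in> V" using u reach_subV True by auto
        show "a \<le> R"
        proof (cases "u = v")
          case False
          then show ?thesis using u uV GG[OF uV False] B[of u] reachV[OF True] by simp
        next
          case True
          have vr: "v \<in> reach E x" using u True by simp
          have Rc: "c \<le> R" using B[of v] reachV[OF \<open>x \<in> V\<close>] vr childrenv False G'_def LC'v
            by (metis (no_types, lifting) UnI1 W_def assms(8) childrenv empty_is_image)
          have Rq: "cMax (iota ar D ` Q) \<le> R"
          proof (rule cMax_leI)
            show "finite (iota ar D ` Q)" using finQ by simp
          next
            fix b assume "b \<in> iota ar D ` Q"
            then obtain q where q: "q \<in> Q" "b = iota ar D q" by auto
            have "w q \<in> reach E' x" using reachV[OF \<open>x \<in> V\<close>] vr q W_def by auto
            moreover have "G' (w q) = b" using q childrenW LA'W W_def G'_def by auto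
            ultimately show "b \<le> R" using B by metis
          qed
          have Ra: "cMax (LC ` ancs E v) \<le> R"
          proof (rule cMax_leI)
            show "finite (LC ` ancs E v)" using finA by simp
          next
            fix b assume "b \<in> LC ` ancs E v"
            then obtain a where a: "a \<in> ancs E v" "b = LC a" by auto
            have av: "(a,v) \<in> E\<^sup>+" using a unfolding ancs_def by simp
            have xv: "(x,v) \<in> E\<^sup>*" using vr unfolding reach_def by simp
            from tree_anc[OF EV upar noroot xv av]
            show "b \<le> R"
            proof
              assume "(a,x) \<in> E\<^sup>+" then show ?thesis using C a unfolding ancs_def by simp
            next
              assume ax: "(x,a) \<in> E\<^sup>*"
              have aV: "a \<in> V" "a \<noteq> v" using a ancs_sub v_ancs by auto
              have "children E a \<noteq> {}" using av noEv unfolding children_def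
                by (metis empty_iff mem_Collect_eq tranclD)
              then have "G' a = b" using GG[OF aV] a unfolding G_def by simp
              moreover have "a \<in> reach E' x" using ax reachV[OF \<open>x \<in> V\<close>] unfolding reach_def by auto
              ultimately show ?thesis using B by metis
            qed
          qed
          have "a = iota ar D (LA v)" using u True Gv by simp
          also have "\<dots> \<le> R" using S1 Rc Rq Ra by (metis max.bounded_iff order_trans)
          finally show ?thesis .
        qed
      qed
      have "iota ar D (LA' x) \<le> R"
        using wfc True A D LA'V by (metis max.bounded_iff order_trans)
      then show ?thesis using wfc True LA'V LCA unfolding R_def by simp
    next
      case False
      then obtain q where q: "q \<in> Q" "x = w q" using x unfolding W_def by auto
      have "G' x = iota ar D (LA' x)" unfolding G'_def using childrenW x False by simp
      then have "iota ar D (LA' x) \<le> cMax (G' ` reach E' x)"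
        using reachW q by (simp add: le_cMaxI)
      moreover have "LC' ` ancs E' x = insert c (LC ` ancs E v)"
        using ancsW q LC'v LCeq by (metis image_cong image_insert)
      moreover have "cMax (insert c (LC ` ancs E v)) = max (cMax (LC ` ancs E v)) c"
        unfolding cMax_def using finA
        by (simp add: insert_commute max.commute)
      ultimately show ?thesis using S2 q LA'W by (simp add: le_max_iff_disj)
    qed
  qed
  have "well_formed ar D (V \<union> W) E' r LA' LC'"
    unfolding well_formed_def using pt' wfc' unfolding G'_def by blast
  then show ?thesis unfolding W_def E'_def F_def LA'_def LC'_def .
qed

end
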